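(* Let $\{X_n\}_{n\ge1}$ be a strictly stationary sequence of centered, square integrable, associated random variables with $\sum_{j=1}^\infty c_j<\infty$, where $c_j=\mathrm{Cov}(X_1,X_{1+j})$, and $\sigma^2:=E X_1^2+2\sum_{j=1}^\infty c_j>0$. Let $S_n=\sum_{j=1}^nX_j$, $s_n^2=ES_n^2$, and assume (A2) $\left|\frac{s_n^2}{n\sigma^2}-1\right|=O(n^{-\theta})$ for some $\theta>0$. Fix $0<\alpha<1$, let $p_n=[n^{1-\alpha}]$, $m_n=[n/p_n]$, $b_n=(\log n)^b$ with $b<0$. Let $G_n$ be the distribution function with characteristic function $\exp\!\big(-\frac{m_nt^2s_{p_n}^2}{2s_n^2}\big)$ and $\Phi$ the standard normal distribution function. Then there are constants $C_{17},C_{18}>0$ independent of $n$ such that for all sufficiently large $n$ $$\sup_{x\in\mathbb R}|G_n(x)-\Phi(x)|<C_{17}\frac{1}{b_nn^{\alpha/2}}I\Big(\alpha\le\tfrac{2\theta}{1+2\theta}\Big)+C_{18}\frac{1}{n^{(1-\alpha)\theta}}I\Big(\alpha>\tfrac{2\theta}{1+2\theta}\Big).$$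
   Context: Associated: $\mathrm{Cov}(f(X_1,\dots,X_k),g(X_1,\dots,X_k))\ge0$ for all coordinatewise nondecreasing $f,g$ for which it exists, for every finite initial segment. $[r]$ is the largest integer $\le r$; $I(\cdot)$ is the indicator of the condition. *)

theory Defs
  imports "HOL-Probability.Probability" "HOL-Library.Landau_Symbols"
begin

text \<open>The sequence is indexed from 1: X 1, X 2, ...  (the value X 0 plays no role).\<close>

text \<open>Associated: for every finite initial segment (X_1,...,X_k) and all coordinatewise
  nondecreasing f, g for which the covariance exists, Cov(f(X_1..X_k), g(X_1..X_k)) >= 0.
  A vector in R^k is represented as a function nat => real, coordinate i (i < k) being X_(i+1);
  coordinatewise monotonicity in the first k coordinates forces f to depend only on them.\<close>
definition coord_mono :: "nat \<Rightarrow> ((nat \<Rightarrow> real) \<Rightarrow> real) \<Rightarrow> bool" where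
  "coord_mono k f \<longleftrightarrow> (\<forall>x y. (\<forall>i<k. x i \<le> y i) \<longrightarrow> f x \<le> f y)"

definition associated :: "'a measure \<Rightarrow> (nat \<Rightarrow> 'a \<Rightarrow> real) \<Rightarrow> bool" where
  "associated M X \<longleftrightarrow>
     (\<forall>k f g. coord_mono k f \<and> coord_mono k g
        \<and> integrable M (\<lambda>\<omega>. f (\<lambda>i. X (Suc i) \<omega>))
        \<and> integrable M (\<lambda>\<omega>. g (\<lambda>i. X (Suc i) \<omega>))
        \<and> integrable M (\<lambda>\<omega>. f (\<lambda>i. X (Suc i) \<omega>) * g (\<lambda>i. X (Suc i) \<omega>))
        \<longrightarrow> (\<integral>\<omega>. f (\<lambda>i. X (Suc i) \<omega>) * g (\<lambda>i. X (Suc i) \<omega>) \<partial>M)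
              - (\<integral>\<omega>. f (\<lambda>i. X (Suc i) \<omega>) \<partial>M) * (\<integral>\<omega>. g (\<lambda>i. X (Suc i) \<omega>) \<partial>M) \<ge> 0)"

definition strictly_stationary :: "'a measure \<Rightarrow> (nat \<Rightarrow> 'a \<Rightarrow> real) \<Rightarrow> bool" where
  "strictly_stationary M X \<longleftrightarrow>
     (\<forall>k h. distr M (PiM {..<k} (\<lambda>_. (borel :: real measure))) (\<lambda>\<omega>. \<lambda>i\<in>{..<k}. X (Suc i + h) \<omega>)
          = distr M (PiM {..<k} (\<lambda>_. (borel :: real measure))) (\<lambda>\<omega>. \<lambda>i\<in>{..<k}. X (Suc i) \<omega>))"

end

theory Submission
  imports Defs
begin


lemma std_density_mono:
  fixes r y :: real
  assumes "0 \<le> r" "r \<le> \<bar>y\<bar>"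
  shows "std_normal_density y \<le> std_normal_density r"
proof -
  have "r^2 \<le> y^2" using assms by (metis abs_ge_zero power2_abs power_mono)
  then show ?thesis unfolding std_normal_density_def
    by (intro mult_left_mono) auto
qed

lemma std_density_x:
  fixes r :: real
  assumes "0 \<le> r"
  shows "r * std_normal_density r \<le> 1"
proof -
  have "exp (r^2/2) \<ge> 1 + r^2/2" by (rule exp_ge_add_one_self)
  moreover have "1 + r^2/2 \<ge> r" 
  proof -
    have "0 \<le> (r - 1)^2" by simp
    thus ?thesis by (simp add: power2_eq_square algebra_simps)
  qed
  ultimately have "r \<le> exp (r^2/2)" by linarith
  hence "r * exp (- (r^2/2)) \<le> 1"
    by (simp add: exp_minus divide_simps)
  moreover have "1 / sqrt (2*pi) \<le> 1"
    using pi_gt3 by simp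
  ultimately have "r * exp (- (r^2/2)) * (1 / sqrt (2*pi)) \<le> 1 * 1"
    by (intro mult_mono) (use assms in auto)
  then show ?thesis unfolding std_normal_density_def by (simp add: algebra_simps)
qed

lemma std_interval_bound:
  fixes a b c :: real
  assumes "a \<le> b" "\<And>y. a < y \<Longrightarrow> y \<le> b \<Longrightarrow> std_normal_density y \<le> c" "c \<ge> 0"
  shows "measure std_normal_distribution {a<..b} \<le> c * (b - a)"
proof -
  have "emeasure std_normal_distribution {a<..b} = (\<integral>\<^sup>+x. ennreal (std_normal_density x) * indicator {a<..b} x \<partial>lborel)"
    by (subst emeasure_density) auto
  also have "\<dots> \<le> (\<integral>\<^sup>+x. ennreal c * indicator {a<..b} x \<partial>lborel)"
    by (intro nn_integral_mono) (auto simp: indicator_def assms(2) ennreal_leI)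
  also have "\<dots> = ennreal c * emeasure lborel {a<..b}"
    by (subst nn_integral_cmult_indicator) auto
  also have "\<dots> = ennreal (c * (b - a))"
    using assms by (simp add: ennreal_mult)
  finally show ?thesis
    using assms by (simp add: measure_def enn2real_leI)
qed

lemma std_cdf_diff:
  fixes a b :: real
  assumes "a \<le> b"
  shows "cdf std_normal_distribution b - cdf std_normal_distribution a = measure std_normal_distribution {a<..b}"
proof (cases "a = b")
  case False
  interpret real_distribution std_normal_distribution by (rule real_dist_normal_dist)
  show ?thesis using assms False by (intro cdf_diff_eq) auto
qed simp

lemma std_cdf_scale:
  fixes s x :: real
  assumes s: "s > 0"
  shows "\<bar>cdf std_normal_distribution (s * x) - cdf std_normal_distribution x\<bar> \<le> \<bar>s - 1\<bar> / min 1 s"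
proof -
  define r where "r = min 1 s * \<bar>x\<bar>"
  have r0: "r \<ge> 0" using s by (simp add: r_def)
  have xr: "\<bar>x\<bar> = r / min 1 s" using s by (simp add: r_def)
  have key: "std_normal_density y \<le> std_normal_density r"
    if "min x (s*x) < y" "y \<le> max x (s*x)" for y
  proof (rule std_density_mono[OF r0])
    show "r \<le> \<bar>y\<bar>"
    proof (cases "x \<ge> 0")
      case True
      then have "min x (s*x) = min 1 s * x" by (simp add: min_mult_distrib_right)
      then show ?thesis using that True by (simp add: r_def)
    next
      case False
      then have "max x (s*x) = min 1 s * x"
        by (simp add: min_mult_distrib_right)
      then show ?thesis using that False by (simp add: r_def)
    qed
  qed
  have len: "max x (s*x) - min x (s*x) = \<bar>s - 1\<bar> * \<bar>x\<bar>"
  proof -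
    have "max x (s*x) - min x (s*x) = \<bar>(s - 1) * x\<bar>"
      by (auto simp: max_def min_def algebra_simps)
    thus ?thesis by (simp add: abs_mult)
  qed
  have "\<bar>cdf std_normal_distribution (s * x) - cdf std_normal_distribution x\<bar>
     = measure std_normal_distribution {min x (s*x)<..max x (s*x)}"
    using std_cdf_diff[of x "s*x"] std_cdf_diff[of "s*x" x]
    by (cases "x \<le> s * x") (auto simp: min_def max_def, smt (verit) measure_nonneg)
  also have "\<dots> \<le> std_normal_density r * (\<bar>s - 1\<bar> * \<bar>x\<bar>)"
    using std_interval_bound[of "min x (s*x)" "max x (s*x)" "std_normal_density r"] key len
    by (simp add: normal_density_nonneg)
  also have "\<dots> = \<bar>s - 1\<bar> * (r * std_normal_density r) / min 1 s"
    by (simp add: xr)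
  also have "\<dots> \<le> \<bar>s - 1\<bar> * 1 / min 1 s"
    using s std_density_x[OF r0] by (intro divide_right_mono mult_left_mono) auto
  finally show ?thesis by simp
qed

lemma normal_char_cdf:
  fixes v x :: real and G :: "real measure"
  assumes v: "v > 0" and G: "real_distribution G"
    and ch: "\<And>t. char G t = complex_of_real (exp (- (v * t\<^sup>2) / 2))"
  shows "cdf G x = cdf std_normal_distribution (x / sqrt v)"
proof -
  define w where "w = sqrt v"
  have w: "w > 0" using v by (simp add: w_def)
  interpret N: real_distribution std_normal_distribution by (rule real_dist_normal_dist)
  define G' where "G' = distr std_normal_distribution borel (\<lambda>y. w * y)"
  have G': "real_distribution G'"
    unfolding G'_def by (rule N.real_distribution_distr) simp
  have "char G' t = char G t" for t
  proof -
    have "char G' t = (CLINT y|std_normal_distribution. iexp (t * (w * y)))"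
      unfolding G'_def char_def by (subst integral_distr) auto
    also have "\<dots> = char std_normal_distribution (t * w)"
      unfolding char_def by (simp add: mult.assoc)
    also have "\<dots> = complex_of_real (exp (- (v * t\<^sup>2) / 2))"
      using v by (simp add: char_std_normal_distribution w_def power_mult_distrib)
    finally show ?thesis using ch by simp
  qed
  then have "G = G'" by (intro Levy_uniqueness[OF G G'] ext) simp
  have "cdf G x = measure std_normal_distribution ((\<lambda>y. w * y) -` {..x})"
  proof -
    have "measure G' {..x} = measure std_normal_distribution ((\<lambda>y. w * y) -` {..x} \<inter> space std_normal_distribution)"
      unfolding G'_def by (rule measure_distr) auto
    thus ?thesis using \<open>G = G'\<close> by (simp add: cdf_def)
  qed
  also have "(\<lambda>y. w * y) -` {..x} = {..x / w}"
    using w by (auto simp: field_simps)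
  finally show ?thesis by (simp add: cdf_def w_def)
qed


lemma v_bound:
  fixes N P Mm s K \<theta> \<alpha> En Ep :: real
  assumes N: "N \<ge> 1" and P: "P > 0" "P \<le> N powr (1-\<alpha>)" "P \<ge> N powr (1-\<alpha>) / 2"
    and M: "Mm * P \<le> N" "Mm * P \<ge> N - P" "Mm \<ge> 0"
    and E: "\<bar>En\<bar> \<le> K * N powr (-\<theta>)" "\<bar>Ep\<bar> \<le> K * P powr (-\<theta>)" "\<bar>En\<bar> \<le> 1/2"
    and th: "\<theta> > 0" and al: "\<alpha> < 1" and al0: "\<alpha> > 0" and K: "K \<ge> 0" and s: "s > 0"
  shows "\<bar>Mm * (P * s * (1 + Ep)) / (N * s * (1 + En)) - 1\<bar>
           \<le> N powr (-\<alpha>) + 2 * K * (2 powr \<theta> + 1) * N powr (-((1-\<alpha>)*\<theta>))"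
proof -
  define q where "q = Mm * P / N"
  have N0: "N > 0" using N by simp
  have q1: "q \<le> 1" "q \<ge> 0" using M N0 P by (auto simp: q_def)
  have "N powr (1-\<alpha>) = N * N powr (-\<alpha>)"
    using N0 powr_add[of N 1 "-\<alpha>"] by simp
  hence PN: "P / N \<le> N powr (-\<alpha>)" using P N0 by (simp add: divide_simps mult.commute)
  have q2: "1 - q \<le> N powr (-\<alpha>)"
    using M N0 PN by (simp add: q_def divide_simps) 
  have eq: "Mm * (P * s * (1 + Ep)) / (N * s * (1 + En)) - 1 = (q - 1) + q * (Ep - En) / (1 + En)"
  proof -
    have e: "1 + En > 0" using E(3) by simp
    have "Mm * (P * s * (1 + Ep)) / (N * s * (1 + En)) = q * (1 + Ep) / (1 + En)"
      using s N0 e by (simp add: q_def)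
    also have "\<dots> = (q - 1) + q * (Ep - En) / (1 + En) + 1"
      using e by (simp add: divide_simps) (simp add: algebra_simps)
    finally show ?thesis by simp
  qed
  have d: "1 + En \<ge> 1/2" using E(3) by simp
  have "\<bar>q * (Ep - En) / (1 + En)\<bar> = q * \<bar>Ep - En\<bar> / (1 + En)"
    using q1 d by (simp add: abs_mult)
  also have "\<dots> \<le> 1 * \<bar>Ep - En\<bar> / (1/2)"
    using q1 d by (intro frac_le mult_mono) auto
  also have "\<dots> \<le> 2 * (\<bar>Ep\<bar> + \<bar>En\<bar>)" using abs_triangle_ineq4[of Ep En] by simp
  finally have t2: "\<bar>q * (Ep - En) / (1 + En)\<bar> \<le> 2 * (\<bar>Ep\<bar> + \<bar>En\<bar>)" .
  have Npos: "N powr (1-\<alpha>) / 2 > 0" using N0 by simp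
  have "P powr (-\<theta>) \<le> (N powr (1-\<alpha>) / 2) powr (-\<theta>)"
    using P th Npos by (intro powr_mono2') auto
  also have "\<dots> = 2 powr \<theta> * N powr (-((1-\<alpha>)*\<theta>))"
    by (simp add: powr_divide powr_powr powr_minus divide_simps)
  finally have Pb: "P powr (-\<theta>) \<le> 2 powr \<theta> * N powr (-((1-\<alpha>)*\<theta>))" .
  have Nb: "N powr (-\<theta>) \<le> N powr (-((1-\<alpha>)*\<theta>))"
    using N th al al0 by (intro powr_mono) (auto simp: algebra_simps mult_left_le_one_le)
  have "\<bar>Ep\<bar> + \<bar>En\<bar> \<le> K * (2 powr \<theta> * N powr (-((1-\<alpha>)*\<theta>))) + K * N powr (-((1-\<alpha>)*\<theta>))"
    using E(1,2) Pb Nb K by (meson add_mono mult_left_mono order_trans)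
  hence t3: "2 * (\<bar>Ep\<bar> + \<bar>En\<bar>) \<le> 2 * K * (2 powr \<theta> + 1) * N powr (-((1-\<alpha>)*\<theta>))"
    by (simp add: algebra_simps)
  show ?thesis unfolding eq using q1 q2 t2 t3 by linarith
qed


lemma final_cmp:
  fixes N S K1 \<alpha> \<theta> b C :: real
  assumes N: "N \<ge> 3" and b: "b < 0" and th: "\<theta> > 0" and al: "0 < \<alpha>" "\<alpha> < 1"
    and K1: "K1 \<ge> 0" and C: "C = 2 * (1 + K1) + 1"
    and S: "S \<le> 2 * (N powr (-\<alpha>) + K1 * N powr (-((1-\<alpha>)*\<theta>)))"
  shows "S < C * (1 / (ln N powr b * N powr (\<alpha> / 2))) * (if \<alpha> \<le> 2 * \<theta> / (1 + 2 * \<theta>) then 1 else 0)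
             + C * (1 / N powr ((1 - \<alpha>) * \<theta>)) * (if \<alpha> > 2 * \<theta> / (1 + 2 * \<theta>) then 1 else 0)"
proof -
  have N1: "N \<ge> 1" using N by simp
  have equiv: "\<alpha> \<le> 2 * \<theta> / (1 + 2 * \<theta>) \<longleftrightarrow> \<alpha> / 2 \<le> (1-\<alpha>)*\<theta>"
    using th by (simp add: divide_simps algebra_simps)
  show ?thesis
  proof (cases "\<alpha> \<le> 2 * \<theta> / (1 + 2 * \<theta>)")
    case True
    hence h: "\<alpha> / 2 \<le> (1-\<alpha>)*\<theta>" using equiv by simp
    have a1: "N powr (-\<alpha>) \<le> N powr (-(\<alpha>/2))" using N1 al by (intro powr_mono) auto
    have a2: "N powr (-((1-\<alpha>)*\<theta>)) \<le> N powr (-(\<alpha>/2))" using N1 h by (intro powr_mono) auto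
    have S2: "S \<le> 2 * (1 + K1) * N powr (-(\<alpha>/2))"
    proof -
      have "K1 * N powr (-((1-\<alpha>)*\<theta>)) \<le> K1 * N powr (-(\<alpha>/2))" using a2 K1 by (rule mult_left_mono)
      thus ?thesis using S a1 by (simp add: algebra_simps)
    qed
    have lnN: "ln N \<ge> 1"
    proof -
      have "exp 1 \<le> N" using exp_le N by linarith
      hence "ln (exp 1) \<le> ln N" using N by (subst ln_le_cancel_iff) auto
      thus ?thesis by simp
    qed
    have bn1: "ln N powr b \<le> 1" using powr_mono[of b 0 "ln N"] lnN b by simp
    have bn0: "ln N powr b > 0" using lnN by simp
    have Npos: "N powr (-(\<alpha>/2)) > 0" using N by simp
    have "C * N powr (-(\<alpha>/2)) = 2 * (1 + K1) * N powr (-(\<alpha>/2)) + N powr (-(\<alpha>/2))" using C by (simp add: algebra_simps)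
    hence "S < C * N powr (-(\<alpha>/2))" using S2 Npos by linarith
    also have "N powr (-(\<alpha>/2)) = 1 / N powr (\<alpha>/2)" by (rule powr_minus_divide)
    also have "C * (1 / N powr (\<alpha>/2)) \<le> C * (1 / (ln N powr b * N powr (\<alpha> / 2)))"
    proof -
      have Na: "N powr (\<alpha>/2) > 0" using N by simp
      have "ln N powr b * N powr (\<alpha>/2) \<le> 1 * N powr (\<alpha>/2)"
        using bn1 Na by (intro mult_right_mono) auto
      hence "1 / N powr (\<alpha>/2) \<le> 1 / (ln N powr b * N powr (\<alpha> / 2))"
        using bn0 Na by (intro divide_left_mono) auto
      thus ?thesis using C K1 by (intro mult_left_mono) auto
    qed
    finally show ?thesis using True by simp
  next
    case False
    hence h: "(1-\<alpha>)*\<theta> < \<alpha> / 2" using equiv by simp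
    have a1: "N powr (-\<alpha>) \<le> N powr (-((1-\<alpha>)*\<theta>))" using N1 al h by (intro powr_mono) auto
    have S2: "S \<le> 2 * (1 + K1) * N powr (-((1-\<alpha>)*\<theta>))"
      using S a1 K1 by (simp add: algebra_simps)
    have Npos: "N powr (-((1-\<alpha>)*\<theta>)) > 0" using N by simp
    have "C * N powr (-((1-\<alpha>)*\<theta>)) = 2 * (1 + K1) * N powr (-((1-\<alpha>)*\<theta>)) + N powr (-((1-\<alpha>)*\<theta>))" using C by (simp add: algebra_simps)
    hence "S < C * N powr (-((1-\<alpha>)*\<theta>))" using S2 Npos by linarith
    also have "N powr (-((1-\<alpha>)*\<theta>)) = 1 / N powr ((1-\<alpha>)*\<theta>)" by (rule powr_minus_divide)
    finally show ?thesis using False by simp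
  qed
qed


lemma w_arith:
  fixes w :: real
  assumes "w \<ge> 1/2"
  shows "\<bar>1/w - 1\<bar> / min 1 (1/w) \<le> 2 * \<bar>w\<^sup>2 - 1\<bar>"
proof (cases "w \<le> 1")
  case True
  hence "1/w \<ge> 1" using assms by simp
  hence "\<bar>1/w - 1\<bar> / min 1 (1/w) = (1 - w)/w" using assms by (simp add: divide_simps)
  also have "\<dots> \<le> 2 * (1 - w)" using mult_right_mono[of 1 "2*w" "1-w"] assms True by (simp add: divide_simps algebra_simps)
  also have "\<dots> \<le> 2 * \<bar>w\<^sup>2 - 1\<bar>" proof -
    have ww: "w*w \<le> w" using mult_right_mono[of w 1 w] assms True by simp
    show ?thesis using ww by (simp add: power2_eq_square abs_if)
  qed
  finally show ?thesis .
next
  case False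
  hence "1/w \<le> 1" using assms by simp
  hence "\<bar>1/w - 1\<bar> / min 1 (1/w) = w - 1" using assms False by (simp add: divide_simps)
  also have "\<dots> \<le> 2 * \<bar>w\<^sup>2 - 1\<bar>" proof -
    have ww: "w*w \<ge> w" using mult_right_mono[of 1 w w] False by simp
    have nn: "w*w - 1 \<ge> 0" using ww False by linarith
    have "\<bar>w\<^sup>2 - 1\<bar> = w*w - 1" using nn by (simp add: power2_eq_square)
    thus ?thesis using ww False by (smt (verit))
  qed
  finally show ?thesis .
qed


lemma sup_bound:
  fixes v :: real and G :: "real measure"
  assumes v: "v \<ge> 1/4" and G: "real_distribution G"
    and ch: "\<And>t. char G t = complex_of_real (exp (- (v * t\<^sup>2) / 2))"
  shows "(SUP x. \<bar>cdf G x - cdf std_normal_distribution x\<bar>) \<le> 2 * \<bar>v - 1\<bar>"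
proof (rule cSUP_least)
  fix x :: real
  have v0: "v > 0" using v by simp
  have w: "sqrt v \<ge> 1/2" using v real_sqrt_le_mono[of "1/4" v] by (simp add: real_sqrt_divide)
  have "cdf G x = cdf std_normal_distribution ((1 / sqrt v) * x)"
    using normal_char_cdf[OF v0 G ch] by simp
  hence "\<bar>cdf G x - cdf std_normal_distribution x\<bar> \<le> \<bar>1 / sqrt v - 1\<bar> / min 1 (1 / sqrt v)"
    using std_cdf_scale[of "1 / sqrt v" x] v0 by simp
  also have "\<dots> \<le> 2 * \<bar>(sqrt v)\<^sup>2 - 1\<bar>" by (rule w_arith[OF w])
  finally show "\<bar>cdf G x - cdf std_normal_distribution x\<bar> \<le> 2 * \<bar>v - 1\<bar>" using v0 by simp
qed simp

lemma ev_small: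
  fixes e c :: real
  assumes "e > 0" "c > 0"
  shows "eventually (\<lambda>n. real n powr (-e) < c) sequentially"
proof -
  have "((\<lambda>n. real n powr (-e)) \<longlongrightarrow> 0) sequentially"
    using assms by (intro tendsto_neg_powr filterlim_real_sequentially) auto
  thus ?thesis using assms(2) by (rule order_tendstoD(2))
qed

lemma ev_big:
  fixes e c :: real
  assumes "e > 0"
  shows "eventually (\<lambda>n. real n powr e \<ge> c) sequentially"
proof -
  have "eventually (\<lambda>n. real n powr (-e) < 1 / (\<bar>c\<bar> + 1) \<and> n \<ge> 1) sequentially"
    using ev_small[OF assms, of "1 / (\<bar>c\<bar> + 1)"] eventually_ge_at_top[of 1]
    by (auto intro: eventually_conj)
  thus ?thesis
  proof (rule eventually_mono)
    fix n :: nat assume h: "real n powr (-e) < 1 / (\<bar>c\<bar> + 1) \<and> n \<ge> 1"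
    have pos: "real n powr e > 0" using h by simp
    have "inverse (real n powr e) < inverse (\<bar>c\<bar> + 1)" using h by (simp add: powr_minus inverse_eq_divide)
    from inverse_less_imp_less[OF this pos] have "\<bar>c\<bar> + 1 < real n powr e" .
    thus "real n powr e \<ge> c" by linarith
  qed
qed


theorem proposition3p9:
  fixes M :: "'a measure" and X :: "nat \<Rightarrow> 'a \<Rightarrow> real"
    and c :: "nat \<Rightarrow> real" and \<sigma>2 \<theta> \<alpha> b :: real
    and S :: "nat \<Rightarrow> 'a \<Rightarrow> real" and s2 :: "nat \<Rightarrow> real"
    and p m :: "nat \<Rightarrow> nat" and bn :: "nat \<Rightarrow> real"
  assumes prob: "prob_space M"
    and rv: "\<And>n. n \<ge> 1 \<Longrightarrow> X n \<in> borel_measurable M"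
    and sq_int: "\<And>n. n \<ge> 1 \<Longrightarrow> integrable M (\<lambda>\<omega>. (X n \<omega>)\<^sup>2)"
    and centered: "\<And>n. n \<ge> 1 \<Longrightarrow> (\<integral>\<omega>. X n \<omega> \<partial>M) = 0"
    and stat: "strictly_stationary M X"
    and assoc: "associated M X"
    and c_def: "\<And>j. c j = (\<integral>\<omega>. X 1 \<omega> * X (1 + j) \<omega> \<partial>M)
                         - (\<integral>\<omega>. X 1 \<omega> \<partial>M) * (\<integral>\<omega>. X (1 + j) \<omega> \<partial>M)"
    and c_summable: "summable (\<lambda>j. c (Suc j))"
    and \<sigma>2_def: "\<sigma>2 = (\<integral>\<omega>. (X 1 \<omega>)\<^sup>2 \<partial>M) + 2 * (\<Sum>j. c (Suc j))"
    and \<sigma>2_pos: "\<sigma>2 > 0"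
    and S_def: "\<And>n \<omega>. S n \<omega> = (\<Sum>j=1..n. X j \<omega>)"
    and s2_def: "\<And>n. s2 n = (\<integral>\<omega>. (S n \<omega>)\<^sup>2 \<partial>M)"
    and \<theta>_pos: "\<theta> > 0"
    and A2: "(\<lambda>n. \<bar>s2 n / (real n * \<sigma>2) - 1\<bar>) \<in> O(\<lambda>n. real n powr (- \<theta>))"
    and \<alpha>: "0 < \<alpha>" "\<alpha> < 1"
    and p_def: "\<And>n. p n = nat \<lfloor>real n powr (1 - \<alpha>)\<rfloor>"
    and m_def: "\<And>n. m n = nat \<lfloor>real n / real (p n)\<rfloor>"
    and b_neg: "b < 0"
    and bn_def: "\<And>n. bn n = ln (real n) powr b"
  shows "\<exists>C17 C18. C17 > 0 \<and> C18 > 0 \<and>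
    (\<forall>\<^sub>F n in sequentially. \<forall>G :: real measure.
       real_distribution G
       \<and> (\<forall>t. char G t = complex_of_real (exp (- (real (m n) * t\<^sup>2 * s2 (p n)) / (2 * s2 n))))
       \<longrightarrow> (SUP x. \<bar>cdf G x - cdf std_normal_distribution x\<bar>)
           < C17 * (1 / (bn n * real n powr (\<alpha> / 2))) * (if \<alpha> \<le> 2 * \<theta> / (1 + 2 * \<theta>) then 1 else 0)
             + C18 * (1 / real n powr ((1 - \<alpha>) * \<theta>)) * (if \<alpha> > 2 * \<theta> / (1 + 2 * \<theta>) then 1 else 0))"
proof -
  define e where "e n = s2 n / (real n * \<sigma>2) - 1" for n
  obtain K where K: "K > 0"
    and Kev: "eventually (\<lambda>n. norm \<bar>s2 n / (real n * \<sigma>2) - 1\<bar> \<le> K * norm (real n powr (- \<theta>))) sequentially"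
    using landau_o.bigE[OF A2] by blast
  then obtain N0 where N0: "\<And>n. n \<ge> N0 \<Longrightarrow> \<bar>e n\<bar> \<le> K * real n powr (- \<theta>)"
    by (auto simp: eventually_sequentially e_def)
  define K1 where "K1 = 2 * K * (2 powr \<theta> + 1)"
  have K1: "K1 \<ge> 0" using K by (simp add: K1_def)
  define C where "C = 2 * (1 + K1) + 1"
  have C: "C > 0" using K1 by (simp add: C_def)
  have a1: "1 - \<alpha> > 0" "(1 - \<alpha>) * \<theta> > 0" using \<alpha> \<theta>_pos by auto
  have ev: "eventually (\<lambda>n. n \<ge> max 3 N0 \<and> real n powr (1 - \<alpha>) \<ge> 2 * real N0 + 2
      \<and> real n powr (-\<theta>) < 1 / (2 * K) \<and> real n powr (-\<alpha>) < 3/16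
      \<and> real n powr (-((1-\<alpha>)*\<theta>)) < 3 / (16 * (K1 + 1))) sequentially"
    using eventually_ge_at_top[of "max 3 N0"] ev_big[OF a1(1), of "2 * real N0 + 2"]
      ev_small[OF \<theta>_pos, of "1/(2*K)"] ev_small[OF \<alpha>(1), of "3/16"]
      ev_small[OF a1(2), of "3 / (16 * (K1 + 1))"] K K1
    by (auto intro!: eventually_conj)
  show ?thesis
  proof (intro exI conjI)
    show "C > 0" by (rule C)
    show "C > 0" by (rule C)
    show "\<forall>\<^sub>F n in sequentially. \<forall>G :: real measure.
       real_distribution G
       \<and> (\<forall>t. char G t = complex_of_real (exp (- (real (m n) * t\<^sup>2 * s2 (p n)) / (2 * s2 n))))
       \<longrightarrow> (SUP x. \<bar>cdf G x - cdf std_normal_distribution x\<bar>)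
           < C * (1 / (bn n * real n powr (\<alpha> / 2))) * (if \<alpha> \<le> 2 * \<theta> / (1 + 2 * \<theta>) then 1 else 0)
             + C * (1 / real n powr ((1 - \<alpha>) * \<theta>)) * (if \<alpha> > 2 * \<theta> / (1 + 2 * \<theta>) then 1 else 0)"
      using ev
    proof (rule eventually_mono, intro allI impI)
      fix n :: nat and G :: "real measure"
      assume h: "n \<ge> max 3 N0 \<and> real n powr (1 - \<alpha>) \<ge> 2 * real N0 + 2
      \<and> real n powr (-\<theta>) < 1 / (2 * K) \<and> real n powr (-\<alpha>) < 3/16
      \<and> real n powr (-((1-\<alpha>)*\<theta>)) < 3 / (16 * (K1 + 1))"
      assume hG: "real_distribution G
       \<and> (\<forall>t. char G t = complex_of_real (exp (- (real (m n) * t\<^sup>2 * s2 (p n)) / (2 * s2 n))))"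
      define N where "N = real n"
      define P where "P = real (p n)"
      define Mm where "Mm = real (m n)"
      have N3: "N \<ge> 3" using h by (simp add: N_def)
      have fl: "N powr (1 - \<alpha>) \<ge> 2" using h by (simp add: N_def)
      have Pfl: "P = of_int \<lfloor>N powr (1 - \<alpha>)\<rfloor>"
        using fl by (simp add: P_def p_def N_def)
      have P1: "P \<le> N powr (1-\<alpha>)" "P > N powr (1-\<alpha>) - 1"
        unfolding Pfl by linarith+
      have P2: "P \<ge> N powr (1-\<alpha>) / 2" using P1 fl by linarith
      have P0: "P > 0" using P2 fl by linarith
      have pN0: "p n \<ge> N0"
      proof -
        have "real (p n) \<ge> real N0" using P2 h by (simp add: P_def N_def)
        thus ?thesis by simp
      qed
      have Mfl: "Mm = of_int \<lfloor>N / P\<rfloor>"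
        using P0 N3 by (simp add: Mm_def m_def N_def P_def)
      have M1: "Mm \<le> N / P" "Mm > N / P - 1" unfolding Mfl by linarith+
      have M0: "Mm \<ge> 0" by (simp add: Mm_def)
      have M2: "Mm * P \<le> N" using M1 P0 by (simp add: field_simps)
      have M3: "Mm * P \<ge> N - P" using M1 P0 by (simp add: field_simps)
      have En: "\<bar>e n\<bar> \<le> K * N powr (-\<theta>)" using N0[of n] h by (simp add: N_def)
      have Ep: "\<bar>e (p n)\<bar> \<le> K * P powr (-\<theta>)" using N0[OF pN0] by (simp add: P_def)
      have En2: "\<bar>e n\<bar> \<le> 1/2"
      proof -
        have "K * N powr (-\<theta>) \<le> K * (1 / (2 * K))"
          using h K by (intro mult_left_mono) (auto simp: N_def)
        thus ?thesis using En K by simp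
      qed
      have s2n: "s2 n = N * \<sigma>2 * (1 + e n)"
        using N3 \<sigma>2_pos by (simp add: e_def N_def)
      have s2p: "s2 (p n) = P * \<sigma>2 * (1 + e (p n))"
        using P0 \<sigma>2_pos by (simp add: e_def P_def)
      define v where "v = Mm * s2 (p n) / s2 n"
      have vb: "\<bar>v - 1\<bar> \<le> N powr (-\<alpha>) + K1 * N powr (-((1-\<alpha>)*\<theta>))"
        unfolding v_def s2n s2p K1_def
        using v_bound[of N P \<alpha> Mm "e n" K \<theta> "e (p n)" \<sigma>2] N3 P0 P1 P2 M2 M3 M0 En Ep En2
          \<theta>_pos \<alpha> K \<sigma>2_pos by simp
      have small: "N powr (-\<alpha>) + K1 * N powr (-((1-\<alpha>)*\<theta>)) \<le> 3/8"
      proof -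
        have "K1 * N powr (-((1-\<alpha>)*\<theta>)) \<le> (K1 + 1) * (3 / (16 * (K1 + 1)))"
          using h K1 by (intro mult_mono) (auto simp: N_def)
        also have "\<dots> = 3/16" using K1 by (simp add: divide_simps)
        finally show ?thesis using h by (simp add: N_def)
      qed
      have v4: "v \<ge> 1/4" using vb small by linarith
      have s2n0: "s2 n \<noteq> 0"
      proof -
        have "1 + e n > 0" using En2 by simp
        thus ?thesis unfolding s2n using N3 \<sigma>2_pos by simp
      qed
      have ch: "\<And>t. char G t = complex_of_real (exp (- (v * t\<^sup>2) / 2))"
      proof -
        fix t
        have "- (real (m n) * t\<^sup>2 * s2 (p n)) / (2 * s2 n) = - (v * t\<^sup>2) / 2"
          using s2n0 by (simp add: v_def Mm_def field_simps)
        thus "char G t = complex_of_real (exp (- (v * t\<^sup>2) / 2))" using hG by simp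
      qed
      have S: "(SUP x. \<bar>cdf G x - cdf std_normal_distribution x\<bar>)
          \<le> 2 * (N powr (-\<alpha>) + K1 * N powr (-((1-\<alpha>)*\<theta>)))"
        using sup_bound[OF v4 conjunct1[OF hG] ch] mult_left_mono[OF vb, of 2]
        by (rule order_trans) simp
      show "(SUP x. \<bar>cdf G x - cdf std_normal_distribution x\<bar>)
           < C * (1 / (bn n * real n powr (\<alpha> / 2))) * (if \<alpha> \<le> 2 * \<theta> / (1 + 2 * \<theta>) then 1 else 0)
             + C * (1 / real n powr ((1 - \<alpha>) * \<theta>)) * (if \<alpha> > 2 * \<theta> / (1 + 2 * \<theta>) then 1 else 0)"
        using final_cmp[OF N3 b_neg \<theta>_pos \<alpha> K1 C_def S] by (simp add: bn_def N_def)
    qed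
  qed
qed

end
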